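(* All POPs $(a,b,c;d,e)$ with either $\{a,b,c\}=\{1,2,3\}$ and $\{d,e\}=\{4,5\}$, or $\{a,b,c\}=\{3,4,5\}$ and $\{d,e\}=\{1,2\}$, are Wilf-equivalent to one another.
   Context: A partially ordered pattern (POP) $p$ of size $k$ is a partial order $\le_p$ on $[k]$. A permutation $\pi=\pi_1\cdots\pi_n$ contains $p$ if there are indices $i_1<\dots<i_k$ with $\pi_{i_j}<\pi_{i_m}$ whenever $j<_p m$; otherwise it avoids $p$. $p\sim q$ (Wilf-equivalence) means the numbers of permutations of $[n]$ avoiding $p$ and avoiding $q$ coincide for all $n\ge1$. Notation: $(a,b,c;d,e)$ denotes the POP of size $5$ on $\{a,b,c,d,e\}=[5]$ whose relations are generated by the chain $c<b<a$ and the chain $e<d$ (no other comparabilities). *)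

theory Defs
  imports Main
begin

text \<open>A POP of size k is given by its strict order relation on {1..k}
  (rel j m means j <_p m).  Permutations of [n] are lists of length n
  containing each of 1..n exactly once; list positions are 0-based.\<close>

definition perms :: "nat \<Rightarrow> nat list set" where
  "perms n = {\<pi>. distinct \<pi> \<and> set \<pi> = {1..n}}"

definition contains_pop :: "nat \<Rightarrow> (nat \<Rightarrow> nat \<Rightarrow> bool) \<Rightarrow> nat list \<Rightarrow> bool" where
  "contains_pop k rel \<pi> \<longleftrightarrow>
     (\<exists>idx :: nat \<Rightarrow> nat.
        (\<forall>j\<in>{1..k}. idx j < length \<pi>) \<and>
        (\<forall>j\<in>{1..k}. \<forall>m\<in>{1..k}. j < m \<longrightarrow> idx j < idx m) \<and>
        (\<forall>j\<in>{1..k}. \<forall>m\<in>{1..k}. rel j m \<longrightarrow> \<pi> ! idx j < \<pi> ! idx m))"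

definition avoiders :: "nat \<Rightarrow> (nat \<Rightarrow> nat \<Rightarrow> bool) \<Rightarrow> nat \<Rightarrow> nat list set" where
  "avoiders k rel n = {\<pi> \<in> perms n. \<not> contains_pop k rel \<pi>}"

definition wilf_equiv :: "nat \<Rightarrow> (nat \<Rightarrow> nat \<Rightarrow> bool) \<Rightarrow> (nat \<Rightarrow> nat \<Rightarrow> bool) \<Rightarrow> bool" where
  "wilf_equiv k p q \<longleftrightarrow> (\<forall>n\<ge>1. card (avoiders k p n) = card (avoiders k q n))"

text \<open>The POP (a,b,c;d,e): strict order generated by c<b<a and e<d
  (all strict relations listed, i.e. the transitive closure).\<close>

definition pop5 :: "nat \<Rightarrow> nat \<Rightarrow> nat \<Rightarrow> nat \<Rightarrow> nat \<Rightarrow> nat \<Rightarrow> nat \<Rightarrow> bool" where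
  "pop5 a b c d e j m \<longleftrightarrow>
     (j = c \<and> m = b) \<or> (j = b \<and> m = a) \<or> (j = c \<and> m = a) \<or> (j = e \<and> m = d)"

definition admissible5 :: "nat \<Rightarrow> nat \<Rightarrow> nat \<Rightarrow> nat \<Rightarrow> nat \<Rightarrow> bool" where
  "admissible5 a b c d e \<longleftrightarrow>
     ({a, b, c} = {1, 2, 3} \<and> {d, e} = {4, 5}) \<or>
     ({a, b, c} = {3, 4, 5} \<and> {d, e} = {1, 2})"

end

theory Submission
  imports Defs
begin


lemma cp_cong:
  assumes "\<And>j m. j \<in> {1..k} \<Longrightarrow> m \<in> {1..k} \<Longrightarrow> rel j m = rel' j m"
  shows "contains_pop k rel xs = contains_pop k rel' xs"
proof -
  have "\<And>P. (\<forall>j\<in>{1..k}. \<forall>m\<in>{1..k}. rel j m \<longrightarrow> P j m) = (\<forall>j\<in>{1..k}. \<forall>m\<in>{1..k}. rel' j m \<longrightarrow> P j m)"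
    using assms by auto
  then show ?thesis unfolding contains_pop_def by simp
qed

lemma cp_take:
  assumes "contains_pop k rel (take i xs)"
  shows "contains_pop k rel xs"
  using assms unfolding contains_pop_def
  by (metis (no_types, lifting) length_take min_less_iff_conj nth_take)

lemma mirror_in: "j \<in> {1..k} \<Longrightarrow> k+1-j \<in> {1..(k::nat)}" by auto

lemma cp_rev:
  "contains_pop k rel (rev xs) = contains_pop k (\<lambda>j m. rel (k+1-j) (k+1-m)) xs"
proof
  assume "contains_pop k rel (rev xs)"
  then obtain idx where a: "\<forall>j\<in>{1..k}. idx j < length xs"
    and b: "\<forall>j\<in>{1..k}. \<forall>m\<in>{1..k}. j < m \<longrightarrow> idx j < idx m"
    and c: "\<forall>j\<in>{1..k}. \<forall>m\<in>{1..k}. rel j m \<longrightarrow> rev xs ! idx j < rev xs ! idx m"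
    unfolding contains_pop_def by auto
  have aa: "\<And>j. j \<in> {1..k} \<Longrightarrow> idx (k+1-j) < length xs"
  proof -
    fix j assume "j \<in> {1..k}" hence "k+1-j \<in> {1..k}" by auto
    thus "idx (k+1-j) < length xs" using a by blast
  qed
  define idx' where "idx' t = length xs - 1 - idx (k+1-t)" for t
  show "contains_pop k (\<lambda>j m. rel (k+1-j) (k+1-m)) xs"
    unfolding contains_pop_def
  proof (intro exI[of _ idx'] conjI ballI impI)
    fix j assume "j \<in> {1..k}" hence "idx (k+1-j) < length xs" using aa by auto
    thus "idx' j < length xs" unfolding idx'_def by linarith
  next
    fix j m assume j: "j \<in> {1..k}" and m: "m \<in> {1..k}" and "j < m"
    hence "k+1-m \<in> {1..k}" "k+1-j \<in> {1..k}" "k+1-m < k+1-j" using j m by auto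
    hence "idx (k+1-m) < idx (k+1-j)" using b by blast
    moreover have "idx (k+1-j) < length xs" using aa j by auto
    ultimately show "idx' j < idx' m" unfolding idx'_def by linarith
  next
    fix j m assume j: "j \<in> {1..k}" and m: "m \<in> {1..k}" and r: "rel (k+1-j) (k+1-m)"
    have "rev xs ! idx (k+1-j) < rev xs ! idx (k+1-m)" using c r mirror_in[OF j] mirror_in[OF m] by blast
    moreover have "idx (k+1-j) < length xs" "idx (k+1-m) < length xs" using aa j m by auto
    ultimately show "xs ! idx' j < xs ! idx' m" unfolding idx'_def by (simp add: rev_nth)
  qed
next
  assume "contains_pop k (\<lambda>j m. rel (k+1-j) (k+1-m)) xs"
  then obtain idx where a: "\<forall>j\<in>{1..k}. idx j < length xs"
    and b: "\<forall>j\<in>{1..k}. \<forall>m\<in>{1..k}. j < m \<longrightarrow> idx j < idx m"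
    and c: "\<forall>j\<in>{1..k}. \<forall>m\<in>{1..k}. rel (k+1-j) (k+1-m) \<longrightarrow> xs ! idx j < xs ! idx m"
    unfolding contains_pop_def by auto
  have aa: "\<And>j. j \<in> {1..k} \<Longrightarrow> idx (k+1-j) < length xs"
  proof -
    fix j assume "j \<in> {1..k}" hence "k+1-j \<in> {1..k}" by auto
    thus "idx (k+1-j) < length xs" using a by blast
  qed
  define idx' where "idx' t = length xs - 1 - idx (k+1-t)" for t
  show "contains_pop k rel (rev xs)"
    unfolding contains_pop_def
  proof (intro exI[of _ idx'] conjI ballI impI)
    fix j assume "j \<in> {1..k}" hence "idx (k+1-j) < length xs" using aa by auto
    thus "idx' j < length (rev xs)" unfolding idx'_def by simp
  next
    fix j m assume j: "j \<in> {1..k}" and m: "m \<in> {1..k}" and "j < m"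
    hence "k+1-m \<in> {1..k}" "k+1-j \<in> {1..k}" "k+1-m < k+1-j" using j m by auto
    hence "idx (k+1-m) < idx (k+1-j)" using b by blast
    moreover have "idx (k+1-j) < length xs" using aa j by auto
    ultimately show "idx' j < idx' m" unfolding idx'_def by linarith
  next
    fix j m assume j: "j \<in> {1..k}" and m: "m \<in> {1..k}" and r: "rel j m"
    have r': "rel (k+1-(k+1-j)) (k+1-(k+1-m))" using r j m by auto
    have "xs ! idx (k+1-j) < xs ! idx (k+1-m)" using c r' mirror_in[OF j] mirror_in[OF m] by blast
    moreover have "idx (k+1-j) < length xs" "idx (k+1-m) < length xs" using aa j m by auto
    ultimately show "rev xs ! idx' j < rev xs ! idx' m" unfolding idx'_def by (simp add: rev_nth)
  qed
qed

lemma cp_map_anti: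
  assumes "\<forall>x\<in>set xs. \<forall>y\<in>set xs. x < y \<longrightarrow> f y < f x"
  shows "contains_pop k rel (map f xs) = contains_pop k (\<lambda>j m. rel m j) xs"
proof -
  have "\<And>i i'. i < length xs \<Longrightarrow> i' < length xs \<Longrightarrow> (f (xs!i) < f (xs!i')) = (xs!i' < xs!i)"
    using assms by (metis nat_neq_iff nth_mem order.asym)
  thus ?thesis unfolding contains_pop_def by (auto; blast)
qed


definition chain3 :: "nat \<Rightarrow> nat \<Rightarrow> nat \<Rightarrow> nat \<Rightarrow> nat \<Rightarrow> bool" where
  "chain3 a b c j m \<longleftrightarrow> (j = c \<and> m = b) \<or> (j = b \<and> m = a) \<or> (j = c \<and> m = a)"

lemma three_cases: "(t::nat) \<in> {1..3} \<longleftrightarrow> t = 1 \<or> t = 2 \<or> t = 3" by auto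

lemma cp3_iff:
  "contains_pop 3 rel xs \<longleftrightarrow> (\<exists>i j k. i < j \<and> j < k \<and> k < length xs \<and>
     (\<forall>t\<in>{1..3}. \<forall>s\<in>{1..3}. rel t s \<longrightarrow> [xs!i, xs!j, xs!k] ! (t-1) < [xs!i, xs!j, xs!k] ! (s-1)))"
proof
  assume "contains_pop 3 rel xs"
  then obtain idx where a: "\<forall>j\<in>{1..3}. idx j < length xs"
    and b: "\<forall>j\<in>{1..3}. \<forall>m\<in>{1..3}. j < m \<longrightarrow> idx j < idx m"
    and c: "\<forall>j\<in>{1..3}. \<forall>m\<in>{1..3}. rel j m \<longrightarrow> xs ! idx j < xs ! idx m"
    unfolding contains_pop_def by auto
  have "(\<forall>t\<in>{1..3}. \<forall>s\<in>{1..3}. rel t s \<longrightarrow> [xs!idx 1, xs!idx 2, xs!idx 3] ! (t-1) < [xs!idx 1, xs!idx 2, xs!idx 3] ! (s-1))"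
  proof -
    have e: "\<And>t. t \<in> {1..3} \<Longrightarrow> [xs!idx 1, xs!idx 2, xs!idx 3] ! (t-1) = xs ! idx t"
      unfolding three_cases by auto
    show ?thesis
    proof (intro ballI impI)
      fix t s assume t: "t \<in> {1..3}" and s: "s \<in> {1..3}" and r: "rel t s"
      have "xs!idx t < xs!idx s" using c t s r by blast
      thus "[xs!idx 1, xs!idx 2, xs!idx 3] ! (t-1) < [xs!idx 1, xs!idx 2, xs!idx 3] ! (s-1)"
        by (simp only: e[OF t] e[OF s])
    qed
  qed
  moreover have "idx 1 < idx 2" "idx 2 < idx 3" "idx 3 < length xs" using a b by auto
  ultimately show "\<exists>i j k. i < j \<and> j < k \<and> k < length xs \<and>
     (\<forall>t\<in>{1..3}. \<forall>s\<in>{1..3}. rel t s \<longrightarrow> [xs!i, xs!j, xs!k] ! (t-1) < [xs!i, xs!j, xs!k] ! (s-1))"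
    by blast
next
  assume "\<exists>i j k. i < j \<and> j < k \<and> k < length xs \<and>
     (\<forall>t\<in>{1..3}. \<forall>s\<in>{1..3}. rel t s \<longrightarrow> [xs!i, xs!j, xs!k] ! (t-1) < [xs!i, xs!j, xs!k] ! (s-1))"
  then obtain i j k where ijk: "i < j" "j < k" "k < length xs" and
    c: "\<forall>t\<in>{1..3}. \<forall>s\<in>{1..3}. rel t s \<longrightarrow> [xs!i, xs!j, xs!k] ! (t-1) < [xs!i, xs!j, xs!k] ! (s-1)"
    by blast
  define idx where "idx t = [i,j,k] ! (t-1)" for t
  have e: "\<And>t. t \<in> {1..3} \<Longrightarrow> xs ! idx t = [xs!i, xs!j, xs!k] ! (t-1)"
    unfolding three_cases idx_def by auto
  have a: "\<forall>t\<in>{1..3}. idx t < length xs" unfolding Ball_def three_cases idx_def using ijk by auto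
  have b: "\<forall>t\<in>{1..3}. \<forall>s\<in>{1..3}. t < s \<longrightarrow> idx t < idx s" unfolding Ball_def three_cases idx_def using ijk by auto
  have c': "\<forall>t\<in>{1..3}. \<forall>s\<in>{1..3}. rel t s \<longrightarrow> xs ! idx t < xs ! idx s"
  proof (intro ballI impI)
    fix t s assume t: "t \<in> {1..3}" and s: "s \<in> {1..3}" and r: "rel t s"
    have "[xs!i, xs!j, xs!k] ! (t-1) < [xs!i, xs!j, xs!k] ! (s-1)" using c t s r by blast
    thus "xs!idx t < xs!idx s" by (simp only: e[OF t] e[OF s])
  qed
  show "contains_pop 3 rel xs" unfolding contains_pop_def using a b c' by blast
qed

definition c123 :: "nat list \<Rightarrow> bool" where
  "c123 xs \<longleftrightarrow> (\<exists>i j k. i < j \<and> j < k \<and> k < length xs \<and> xs!i < xs!j \<and> xs!j < xs!k)"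
definition c132 :: "nat list \<Rightarrow> bool" where
  "c132 xs \<longleftrightarrow> (\<exists>i j k. i < j \<and> j < k \<and> k < length xs \<and> xs!i < xs!k \<and> xs!k < xs!j)"

lemma chain3_cond:
  assumes "a \<in> {1..3}" "b \<in> {1..3}" "c \<in> {1..3}"
  shows "(\<forall>t\<in>{1..3}. \<forall>s\<in>{1..3}. chain3 a b c t s \<longrightarrow> (v::nat list)!(t-1) < v!(s-1)) \<longleftrightarrow>
    (v!(c-1) < v!(b-1) \<and> v!(b-1) < v!(a-1))"
  using assms unfolding chain3_def by (auto intro: less_trans)

lemma cp3_chain:
  assumes "a \<in> {1..3}" "b \<in> {1..3}" "c \<in> {1..3}"
  shows "contains_pop 3 (chain3 a b c) xs \<longleftrightarrow> (\<exists>i j k. i < j \<and> j < k \<and> k < length xs \<and>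
     [xs!i, xs!j, xs!k]!(c-1) < [xs!i, xs!j, xs!k]!(b-1) \<and> [xs!i, xs!j, xs!k]!(b-1) < [xs!i, xs!j, xs!k]!(a-1))"
  unfolding cp3_iff chain3_cond[OF assms] by (rule refl)

lemma cp_123: "contains_pop 3 (chain3 3 2 1) xs = c123 xs"
  unfolding c123_def by (subst cp3_chain) auto

lemma cp_132: "contains_pop 3 (chain3 2 3 1) xs = c132 xs"
  unfolding c132_def by (subst cp3_chain) auto

definition E123 :: "nat \<Rightarrow> nat list \<Rightarrow> bool" where
  "E123 x r \<longleftrightarrow> (\<exists>j k. j < k \<and> k < length r \<and> x < r!j \<and> r!j < r!k)"
definition E132 :: "nat \<Rightarrow> nat list \<Rightarrow> bool" where
  "E132 x r \<longleftrightarrow> (\<exists>j k. j < k \<and> k < length r \<and> x < r!k \<and> r!k < r!j)"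

lemma ex_Cons3:
  "(\<exists>i j k. i < j \<and> j < k \<and> k < length (x#r) \<and> P ((x#r)!i) ((x#r)!j) ((x#r)!k)) \<longleftrightarrow>
   (\<exists>i j k. i < j \<and> j < k \<and> k < length r \<and> P (r!i) (r!j) (r!k)) \<or>
   (\<exists>j k. j < k \<and> k < length r \<and> P x (r!j) (r!k))"
proof
  assume "\<exists>i j k. i < j \<and> j < k \<and> k < length (x#r) \<and> P ((x#r)!i) ((x#r)!j) ((x#r)!k)"
  then obtain i j k where h: "i < j" "j < k" "k < length (x#r)" "P ((x#r)!i) ((x#r)!j) ((x#r)!k)" by blast
  then obtain j' k' where jk: "j = Suc j'" "k = Suc k'" by (metis less_imp_Suc_add)
  show "(\<exists>i j k. i < j \<and> j < k \<and> k < length r \<and> P (r!i) (r!j) (r!k)) \<or>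
   (\<exists>j k. j < k \<and> k < length r \<and> P x (r!j) (r!k))"
  proof (cases i)
    case 0 thus ?thesis using h jk by auto
  next
    case (Suc i') thus ?thesis using h jk by auto
  qed
next
  assume "(\<exists>i j k. i < j \<and> j < k \<and> k < length r \<and> P (r!i) (r!j) (r!k)) \<or>
   (\<exists>j k. j < k \<and> k < length r \<and> P x (r!j) (r!k))"
  thus "\<exists>i j k. i < j \<and> j < k \<and> k < length (x#r) \<and> P ((x#r)!i) ((x#r)!j) ((x#r)!k)"
  proof
    assume "\<exists>i j k. i < j \<and> j < k \<and> k < length r \<and> P (r!i) (r!j) (r!k)"
    then obtain i j k where "i < j \<and> j < k \<and> k < length r \<and> P (r!i) (r!j) (r!k)" by blast
    thus ?thesis by (intro exI[of _ "Suc i"] exI[of _ "Suc j"] exI[of _ "Suc k"]) auto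
  next
    assume "\<exists>j k. j < k \<and> k < length r \<and> P x (r!j) (r!k)"
    then obtain j k where "j < k \<and> k < length r \<and> P x (r!j) (r!k)" by blast
    thus ?thesis by (intro exI[of _ 0] exI[of _ "Suc j"] exI[of _ "Suc k"]) auto
  qed
qed

lemma ex_Cons2:
  "(\<exists>j k. j < k \<and> k < length (y#r) \<and> P ((y#r)!j) ((y#r)!k)) \<longleftrightarrow>
   (\<exists>j k. j < k \<and> k < length r \<and> P (r!j) (r!k)) \<or> (\<exists>z\<in>set r. P y z)"
proof
  assume "\<exists>j k. j < k \<and> k < length (y#r) \<and> P ((y#r)!j) ((y#r)!k)"
  then obtain j k where h: "j < k" "k < length (y#r)" "P ((y#r)!j) ((y#r)!k)" by blast
  then obtain k' where k: "k = Suc k'" by (metis less_imp_Suc_add)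
  show "(\<exists>j k. j < k \<and> k < length r \<and> P (r!j) (r!k)) \<or> (\<exists>z\<in>set r. P y z)"
  proof (cases j)
    case 0 thus ?thesis using h k by auto
  next
    case (Suc j') thus ?thesis using h k by auto
  qed
next
  assume "(\<exists>j k. j < k \<and> k < length r \<and> P (r!j) (r!k)) \<or> (\<exists>z\<in>set r. P y z)"
  thus "\<exists>j k. j < k \<and> k < length (y#r) \<and> P ((y#r)!j) ((y#r)!k)"
  proof
    assume "\<exists>j k. j < k \<and> k < length r \<and> P (r!j) (r!k)"
    then obtain j k where "j < k \<and> k < length r \<and> P (r!j) (r!k)" by blast
    thus ?thesis by (intro exI[of _ "Suc j"] exI[of _ "Suc k"]) auto
  next
    assume "\<exists>z\<in>set r. P y z"
    then obtain k where "k < length r" "P y (r!k)" by (metis in_set_conv_nth)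
    thus ?thesis by (intro exI[of _ 0] exI[of _ "Suc k"]) auto
  qed
qed

lemma c123_Cons: "c123 (x#r) \<longleftrightarrow> c123 r \<or> E123 x r"
  unfolding c123_def E123_def using ex_Cons3[of x r "\<lambda>u v w. u < v \<and> v < w"] by simp

lemma c132_Cons: "c132 (x#r) \<longleftrightarrow> c132 r \<or> E132 x r"
  unfolding c132_def E132_def using ex_Cons3[of x r "\<lambda>u v w. u < w \<and> w < v"] by simp

lemma E123_Cons: "E123 x (y#r) \<longleftrightarrow> E123 x r \<or> (\<exists>z\<in>set r. x < y \<and> y < z)"
  unfolding E123_def using ex_Cons2[of y r "\<lambda>v w. x < v \<and> v < w"] by simp

lemma E132_Cons: "E132 x (y#r) \<longleftrightarrow> E132 x r \<or> (\<exists>z\<in>set r. x < z \<and> z < y)"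
  unfolding E132_def using ex_Cons2[of y r "\<lambda>v w. x < w \<and> w < v"] by simp


function G :: "nat \<Rightarrow> nat \<Rightarrow> nat" where
  "G a b = (if a = 0 \<and> b = 0 then 1 else
     (\<Sum>i<a. G i (a+b-1-i)) + (if 0 < b then G a (b-1) else 0))"
  by auto
termination by (relation "measure (\<lambda>(a,b). a+b)") auto

declare G.simps[simp del]

lemma rank_sum:
  "finite (L::nat set) \<Longrightarrow> (\<Sum>y\<in>L. f (card {u\<in>L. u < y})) = (\<Sum>i<card L. f i)"
proof (induction "card L" arbitrary: L)
  case 0
  hence "L = {}" by auto
  thus ?case by simp
next
  case (Suc n)
  hence ne: "L \<noteq> {}" by auto
  define m where "m = Max L"
  have mL: "m \<in> L" using Suc.prems ne unfolding m_def by simp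
  define L0 where "L0 = L - {m}"
  have cL0: "card L0 = n" using Suc.hyps(2) mL Suc.prems unfolding L0_def by simp
  have fL0: "finite L0" using Suc.prems unfolding L0_def by simp
  have LL: "L = insert m L0" "m \<notin> L0" using mL unfolding L0_def by auto
  have e1: "{u\<in>L. u < m} = L0"
    using Suc.prems mL unfolding L0_def m_def by (auto simp: order.not_eq_order_implies_strict)
  have ge: "\<And>y. y\<in>L \<Longrightarrow> y \<le> m" using Suc.prems unfolding m_def by simp
  have e2: "\<And>y. y \<in> L0 \<Longrightarrow> {u\<in>L. u < y} = {u\<in>L0. u < y}"
    using ge unfolding L0_def by force
  have "(\<Sum>y\<in>L. f (card {u\<in>L. u < y})) = f (card L0) + (\<Sum>y\<in>L0. f (card {u\<in>L. u < y}))"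
    using LL fL0 e1 by (simp add: sum.insert)
  also have "(\<Sum>y\<in>L0. f (card {u\<in>L. u < y})) = (\<Sum>y\<in>L0. f (card {u\<in>L0. u < y}))"
    using e2 by (intro sum.cong) auto
  also have "\<dots> = (\<Sum>i<n. f i)" using Suc.hyps(1)[of L0] cL0 fL0 by simp
  finally show ?case using cL0 Suc.hyps(2)[symmetric] by (simp add: add.commute)
qed

lemma G_char:
  fixes F :: "nat set \<Rightarrow> nat \<Rightarrow> nat" and pk :: "nat set \<Rightarrow> nat \<Rightarrow> nat"
  assumes F0: "\<And>x. F {} x = 1"
    and Frec: "\<And>U x. finite U \<Longrightarrow> U \<noteq> {} \<Longrightarrow> F U x =
        (\<Sum>y\<in>{u\<in>U. u \<le> x}. F (U - {y}) y) + (if {u\<in>U. x < u} \<noteq> {} then F (U - {pk U x}) x else 0)"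
    and pk: "\<And>U x. finite U \<Longrightarrow> {u\<in>U. x < u} \<noteq> {} \<Longrightarrow> pk U x \<in> {u\<in>U. x < u}"
  shows "finite U \<Longrightarrow> F U x = G (card {u\<in>U. u \<le> x}) (card {u\<in>U. x < u})"
proof (induction "card U" arbitrary: U x rule: less_induct)
  case less
  show ?case
  proof (cases "U = {}")
    case True thus ?thesis using F0 by (simp add: G.simps)
  next
    case ne: False
    define L where "L = {u\<in>U. u \<le> x}"
    define H where "H = {u\<in>U. x < u}"
    define a where "a = card L"
    define b where "b = card H"
    have fL: "finite L" "finite H" using less.prems unfolding L_def H_def by auto
    have UL: "U = L \<union> H" "L \<inter> H = {}" unfolding L_def H_def by auto
    have cU: "card U = a + b" unfolding a_def b_def using UL fL by (simp add: card_Un_disjoint)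
    have ab: "\<not> (a = 0 \<and> b = 0)" using cU ne less.prems by auto
    have s1: "(\<Sum>y\<in>L. F (U - {y}) y) = (\<Sum>i<a. G i (a+b-1-i))"
    proof -
      have "(\<Sum>y\<in>L. F (U - {y}) y) = (\<Sum>y\<in>L. G (card {u\<in>L. u < y}) (a+b-1-card {u\<in>L. u < y}))"
      proof (intro sum.cong refl)
        fix y assume yL: "y \<in> L"
        hence yU: "y \<in> U" and yx: "y \<le> x" unfolding L_def by auto
        have lt: "card (U - {y}) < card U" using card_Diff1_less[OF less.prems yU] .
        have "F (U - {y}) y = G (card {u\<in>U - {y}. u \<le> y}) (card {u\<in>U - {y}. y < u})"
          using less.hyps[OF lt] less.prems by simp
        moreover have "{u\<in>U - {y}. u \<le> y} = {u\<in>L. u < y}" using yx unfolding L_def by auto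
        moreover have "card {u\<in>U - {y}. y < u} = a+b-1-card {u\<in>L. u < y}"
        proof -
          have "U - {y} = {u\<in>U - {y}. u \<le> y} \<union> {u\<in>U - {y}. y < u}" by auto
          moreover have "finite (U - {y})" using less.prems by simp
          ultimately have "card (U - {y}) = card {u\<in>U - {y}. u \<le> y} + card {u\<in>U - {y}. y < u}"
            by (metis (no_types, lifting) card_Un_disjoint disjoint_iff finite_Un leD mem_Collect_eq)
          moreover have "card (U - {y}) = a + b - 1" using cU yU less.prems by simp
          moreover have "{u\<in>U - {y}. u \<le> y} = {u\<in>L. u < y}" using yx unfolding L_def by auto
          ultimately show ?thesis by simp
        qed
        ultimately show "F (U - {y}) y = G (card {u\<in>L. u < y}) (a+b-1-card {u\<in>L. u < y})" by simp
      qed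
      also have "\<dots> = (\<Sum>i<a. G i (a+b-1-i))"
        unfolding a_def by (rule rank_sum[OF fL(1)])
      finally show ?thesis .
    qed
    have s2: "(if H \<noteq> {} then F (U - {pk U x}) x else 0) = (if 0 < b then G a (b-1) else 0)"
    proof (cases "H = {}")
      case True thus ?thesis unfolding b_def by simp
    next
      case False
      hence pH: "pk U x \<in> H" using pk less.prems unfolding H_def by blast
      hence bpos: "0 < b" unfolding b_def using fL by (auto simp: card_gt_0_iff)
      have pU: "pk U x \<in> U" using pH unfolding H_def by auto
      have lt: "card (U - {pk U x}) < card U" using card_Diff1_less[OF less.prems pU] .
      have "F (U - {pk U x}) x = G (card {u\<in>U - {pk U x}. u \<le> x}) (card {u\<in>U - {pk U x}. x < u})"
        using less.hyps[OF lt] less.prems by simp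
      moreover have "{u\<in>U - {pk U x}. u \<le> x} = L" using pH unfolding L_def H_def by auto
      moreover have "{u\<in>U - {pk U x}. x < u} = H - {pk U x}" unfolding H_def by auto
      moreover have "card (H - {pk U x}) = b - 1" using pH fL unfolding b_def by simp
      ultimately show ?thesis using False bpos unfolding a_def by simp
    qed
    have "F U x = (\<Sum>y\<in>L. F (U - {y}) y) + (if H \<noteq> {} then F (U - {pk U x}) x else 0)"
      using Frec[OF less.prems ne] unfolding L_def H_def by simp
    also have "\<dots> = G a b" using s1 s2 ab by (simp add: G.simps[of a b])
    finally show ?thesis unfolding a_def b_def L_def H_def .
  qed
qed


definition cnt :: "nat set \<Rightarrow> (nat list \<Rightarrow> bool) \<Rightarrow> nat" where
  "cnt U Q = card {r. distinct r \<and> set r = U \<and> Q r}"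

lemma finite_arr: "finite U \<Longrightarrow> finite {r. distinct r \<and> set r = U \<and> Q r}"
proof -
  assume f: "finite U"
  have "{r. distinct r \<and> set r = U \<and> Q r} \<subseteq> {r. set r \<subseteq> U \<and> length r \<le> card U}"
    using distinct_card by (metis (mono_tags, lifting) Collect_mono order_refl)
  moreover have "finite {r. set r \<subseteq> U \<and> length r \<le> card U}"
    using finite_lists_length_le[OF f] by simp
  ultimately show ?thesis by (rule finite_subset)
qed

lemma cnt_empty: "Q [] \<Longrightarrow> cnt {} Q = 1"
  unfolding cnt_def by (simp add: Collect_conv_if)

lemma cnt_decomp:
  assumes fU: "finite U" and ne: "U \<noteq> {}"
  shows "cnt U Q = (\<Sum>y\<in>U. cnt (U - {y}) (\<lambda>r. Q (y#r)))"
proof -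
  let ?A = "\<lambda>y. {r. distinct r \<and> set r = U - {y} \<and> Q (y#r)}"
  have eq: "{r. distinct r \<and> set r = U \<and> Q r} = (\<Union>y\<in>U. (Cons y) ` ?A y)"
  proof (rule set_eqI, rule iffI)
    fix r assume "r \<in> {r. distinct r \<and> set r = U \<and> Q r}"
    hence r: "distinct r" "set r = U" "Q r" by simp_all
    from r(2) ne obtain y r' where yr: "r = y # r'" by (cases r) simp_all
    have yn: "y \<notin> set r'" using r(1) yr by simp
    have "set r' = U - {y}" using r(2) yr yn by auto
    hence "r' \<in> ?A y" using r yr by simp
    moreover have "y \<in> U" using r(2) yr by auto
    ultimately show "r \<in> (\<Union>y\<in>U. (Cons y) ` ?A y)" using yr by blast
  next
    fix r assume "r \<in> (\<Union>y\<in>U. (Cons y) ` ?A y)"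
    then obtain y r' where h: "y \<in> U" "r' \<in> ?A y" "r = y # r'" by blast
    hence "set r = U" by auto
    thus "r \<in> {r. distinct r \<and> set r = U \<and> Q r}" using h by simp
  qed
  have fin: "\<forall>y\<in>U. finite (Cons y ` ?A y)" using fU by (simp add: finite_arr)
  have disj: "\<forall>i\<in>U. \<forall>j\<in>U. i \<noteq> j \<longrightarrow> Cons i ` ?A i \<inter> Cons j ` ?A j = {}" by blast
  have "cnt U Q = card (\<Union>y\<in>U. (Cons y) ` ?A y)" unfolding cnt_def eq ..
  also have "\<dots> = (\<Sum>y\<in>U. card (Cons y ` ?A y))" by (rule card_UN_disjoint[OF fU fin disj])
  also have "\<dots> = (\<Sum>y\<in>U. card (?A y))" by (intro sum.cong refl card_image inj_onI) simp
  also have "\<dots> = (\<Sum>y\<in>U. cnt (U - {y}) (\<lambda>r. Q (y#r)))" unfolding cnt_def ..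
  finally show ?thesis .
qed

lemma cnt_cong: "(\<And>r. set r = U \<Longrightarrow> P r = Q r) \<Longrightarrow> cnt U P = cnt U Q"
  unfolding cnt_def by (intro arg_cong[where f=card] Collect_cong) auto

lemma E123_mono: "y \<le> x \<Longrightarrow> E123 x r \<Longrightarrow> E123 y r"
  unfolding E123_def by (meson le_less_trans)
lemma E132_mono: "y \<le> x \<Longrightarrow> E132 x r \<Longrightarrow> E132 y r"
  unfolding E132_def by (meson le_less_trans)
lemma E123_none: "\<forall>z\<in>set r. z \<le> y \<Longrightarrow> \<not> E123 y r"
  unfolding E123_def by (meson leD less_trans nth_mem)

definition g123 where "g123 U x = cnt U (\<lambda>r. \<not> c123 r \<and> \<not> E123 x r)"
definition h132 where "h132 U x = cnt U (\<lambda>r. \<not> c132 r \<and> \<not> E132 x r)"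

lemma c_Nil: "\<not> c123 []" "\<not> E123 x []" "\<not> c132 []" "\<not> E132 x []"
  unfolding c123_def E123_def c132_def E132_def by auto

lemma g_rec:
  assumes fU: "finite U" and ne: "U \<noteq> {}"
  shows "g123 U x = (\<Sum>y\<in>{u\<in>U. u \<le> x}. g123 (U - {y}) y) +
     (if {u\<in>U. x < u} \<noteq> {} then g123 (U - {Max U}) x else 0)"
proof -
  define T where "T y = cnt (U - {y}) (\<lambda>r. \<not> c123 (y#r) \<and> \<not> E123 x (y#r))" for y
  have g: "g123 U x = (\<Sum>y\<in>U. T y)" unfolding g123_def T_def by (rule cnt_decomp[OF fU ne])
  have UU: "U = {u\<in>U. u \<le> x} \<union> {u\<in>U. x < u}" by auto
  have "(\<Sum>y\<in>U. T y) = (\<Sum>y\<in>{u\<in>U. u \<le> x}. T y) + (\<Sum>y\<in>{u\<in>U. x < u}. T y)"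
    using fU by (subst UU, intro sum.union_disjoint) auto
  moreover have "\<And>y. y \<in> {u\<in>U. u \<le> x} \<Longrightarrow> T y = g123 (U - {y}) y"
  proof -
    fix y assume "y \<in> {u\<in>U. u \<le> x}"
    hence yx: "y \<le> x" by auto
    show "T y = g123 (U - {y}) y" unfolding T_def g123_def
    proof (rule cnt_cong)
      fix r show "(\<not> c123 (y#r) \<and> \<not> E123 x (y#r)) = (\<not> c123 r \<and> \<not> E123 y r)"
        using yx E123_mono[OF yx] by (auto simp: c123_Cons E123_Cons)
    qed
  qed
  moreover have "\<And>y. y \<in> {u\<in>U. x < u} \<Longrightarrow> T y = (if y = Max U then g123 (U - {y}) x else 0)"
  proof -
    fix y assume "y \<in> {u\<in>U. x < u}"
    hence yU: "y \<in> U" and xy: "x < y" by auto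
    show "T y = (if y = Max U then g123 (U - {y}) x else 0)"
    proof (cases "y = Max U")
      case True
      have "\<And>r. set r = U - {y} \<Longrightarrow> \<forall>z\<in>set r. z \<le> y" using True fU by auto
      hence "\<And>r. set r = U - {y} \<Longrightarrow> \<not> E123 y r \<and> \<not> (\<exists>z\<in>set r. x < y \<and> y < z)"
        using E123_none by (meson leD)
      hence f1: "\<And>r. set r = U - {y} \<Longrightarrow> \<not> E123 y r \<and> \<not> (\<exists>z\<in>set r. x < y \<and> y < z)" .
      have "T y = g123 (U - {y}) x" unfolding T_def g123_def
      proof (rule cnt_cong)
        fix r assume r: "set r = U - {y}"
        show "(\<not> c123 (y#r) \<and> \<not> E123 x (y#r)) = (\<not> c123 r \<and> \<not> E123 x r)"
          using f1[OF r] unfolding c123_Cons E123_Cons by blast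
      qed
      thus ?thesis using True by simp
    next
      case False
      have "Max U \<in> U" "y \<le> Max U" using fU ne yU by auto
      hence "Max U \<in> U - {y}" "y < Max U" using False by auto
      hence "\<And>r. set r = U - {y} \<Longrightarrow> (\<exists>z\<in>set r. x < y \<and> y < z)" using xy by blast
      hence "{r. distinct r \<and> set r = U - {y} \<and> \<not> c123 (y#r) \<and> \<not> E123 x (y#r)} = {}"
        unfolding E123_Cons by blast
      hence "T y = 0" unfolding T_def cnt_def by (metis card.empty)
      thus ?thesis using False by simp
    qed
  qed
  ultimately have "g123 U x = (\<Sum>y\<in>{u\<in>U. u \<le> x}. g123 (U - {y}) y) +
     (\<Sum>y\<in>{u\<in>U. x < u}. (if y = Max U then g123 (U - {y}) x else 0))"
    using g by simp
  also have "(\<Sum>y\<in>{u\<in>U. x < u}. (if y = Max U then g123 (U - {y}) x else 0)) =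
     (if {u\<in>U. x < u} \<noteq> {} then g123 (U - {Max U}) x else 0)"
  proof -
    have "(\<Sum>y\<in>{u\<in>U. x < u}. (if y = Max U then g123 (U - {y}) x else 0)) =
       (if Max U \<in> {u\<in>U. x < u} then g123 (U - {Max U}) x else 0)"
      using fU by (simp add: sum.delta)
    moreover have "(Max U \<in> {u\<in>U. x < u}) = ({u\<in>U. x < u} \<noteq> {})"
    proof
      assume "Max U \<in> {u\<in>U. x < u}" thus "{u\<in>U. x < u} \<noteq> {}" by blast
    next
      assume "{u\<in>U. x < u} \<noteq> {}"
      then obtain u where u: "u \<in> U" "x < u" by blast
      moreover have "u \<le> Max U" using fU u by simp
      ultimately show "Max U \<in> {u\<in>U. x < u}" using Max_in[OF fU ne] by simp
    qed
    ultimately show ?thesis by simp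
  qed
  finally show ?thesis .
qed

lemma E132_none: "\<forall>z\<in>set r. z \<le> y \<Longrightarrow> \<not> E132 y r"
  unfolding E132_def by (meson leD less_trans nth_mem)

lemma h_rec:
  assumes fU: "finite U" and ne: "U \<noteq> {}"
  shows "h132 U x = (\<Sum>y\<in>{u\<in>U. u \<le> x}. h132 (U - {y}) y) +
     (if {u\<in>U. x < u} \<noteq> {} then h132 (U - {Min {u\<in>U. x < u}}) x else 0)"
proof -
  define m where "m = Min {u\<in>U. x < u}"
  define T where "T y = cnt (U - {y}) (\<lambda>r. \<not> c132 (y#r) \<and> \<not> E132 x (y#r))" for y
  have g: "h132 U x = (\<Sum>y\<in>U. T y)" unfolding h132_def T_def by (rule cnt_decomp[OF fU ne])
  have UU: "U = {u\<in>U. u \<le> x} \<union> {u\<in>U. x < u}" by auto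
  have "(\<Sum>y\<in>U. T y) = (\<Sum>y\<in>{u\<in>U. u \<le> x}. T y) + (\<Sum>y\<in>{u\<in>U. x < u}. T y)"
    using fU by (subst UU, intro sum.union_disjoint) auto
  moreover have "\<And>y. y \<in> {u\<in>U. u \<le> x} \<Longrightarrow> T y = h132 (U - {y}) y"
  proof -
    fix y assume "y \<in> {u\<in>U. u \<le> x}"
    hence yx: "y \<le> x" by auto
    show "T y = h132 (U - {y}) y" unfolding T_def h132_def
    proof (rule cnt_cong)
      fix r show "(\<not> c132 (y#r) \<and> \<not> E132 x (y#r)) = (\<not> c132 r \<and> \<not> E132 y r)"
        using yx E132_mono[OF yx] by (auto simp: c132_Cons E132_Cons)
    qed
  qed
  moreover have "\<And>y. y \<in> {u\<in>U. x < u} \<Longrightarrow> T y = (if y = m then h132 (U - {y}) x else 0)"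
  proof -
    fix y assume yH: "y \<in> {u\<in>U. x < u}"
    hence yU: "y \<in> U" and xy: "x < y" by auto
    have fH: "finite {u\<in>U. x < u}" using fU by simp
    show "T y = (if y = m then h132 (U - {y}) x else 0)"
    proof (cases "y = m")
      case True
      have "\<And>z. z \<in> U - {y} \<Longrightarrow> \<not> (x < z \<and> z < y)"
      proof
        fix z assume z: "z \<in> U - {y}" and "x < z \<and> z < y"
        hence "z \<in> {u\<in>U. x < u}" "z < y" by auto
        hence "m \<le> z" "z < m" using Min_le[OF fH] True unfolding m_def by auto
        thus False by simp
      qed
      hence f1: "\<And>r. set r = U - {y} \<Longrightarrow> \<not> (\<exists>z\<in>set r. x < z \<and> z < y)" by blast
      have f2: "\<And>r. E132 y r \<Longrightarrow> E132 x r" using E132_mono xy by (meson less_imp_le)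
      have "T y = h132 (U - {y}) x" unfolding T_def h132_def
      proof (rule cnt_cong)
        fix r assume r: "set r = U - {y}"
        show "(\<not> c132 (y#r) \<and> \<not> E132 x (y#r)) = (\<not> c132 r \<and> \<not> E132 x r)"
          using f1[OF r] f2[of r] unfolding c132_Cons E132_Cons by blast
      qed
      thus ?thesis using True by simp
    next
      case False
      have neH: "{u\<in>U. x < u} \<noteq> {}" using yH by blast
      have "m \<in> {u\<in>U. x < u}" unfolding m_def using Min_in[OF fH neH] .
      moreover have "m \<le> y" unfolding m_def using Min_le[OF fH yH] .
      ultimately have "m \<in> U - {y}" "x < m" "m < y" using False by auto
      hence "\<And>r. set r = U - {y} \<Longrightarrow> (\<exists>z\<in>set r. x < z \<and> z < y)" by blast
      hence "{r. distinct r \<and> set r = U - {y} \<and> \<not> c132 (y#r) \<and> \<not> E132 x (y#r)} = {}"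
        unfolding E132_Cons by blast
      hence "T y = 0" unfolding T_def cnt_def by (metis card.empty)
      thus ?thesis using False by simp
    qed
  qed
  ultimately have "h132 U x = (\<Sum>y\<in>{u\<in>U. u \<le> x}. h132 (U - {y}) y) +
     (\<Sum>y\<in>{u\<in>U. x < u}. (if y = m then h132 (U - {y}) x else 0))"
    using g by simp
  also have "(\<Sum>y\<in>{u\<in>U. x < u}. (if y = m then h132 (U - {y}) x else 0)) =
     (if {u\<in>U. x < u} \<noteq> {} then h132 (U - {m}) x else 0)"
  proof -
    have "(\<Sum>y\<in>{u\<in>U. x < u}. (if y = m then h132 (U - {y}) x else 0)) =
       (if m \<in> {u\<in>U. x < u} then h132 (U - {m}) x else 0)"
      using fU by (simp add: sum.delta)
    moreover have "(m \<in> {u\<in>U. x < u}) = ({u\<in>U. x < u} \<noteq> {})"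
    proof
      assume "m \<in> {u\<in>U. x < u}" thus "{u\<in>U. x < u} \<noteq> {}" by blast
    next
      assume "{u\<in>U. x < u} \<noteq> {}" thus "m \<in> {u\<in>U. x < u}" unfolding m_def using fU by (intro Min_in) auto
    qed
    ultimately show ?thesis by simp
  qed
  finally show ?thesis unfolding m_def .
qed


lemma g0: "g123 {} x = 1" unfolding g123_def by (rule cnt_empty) (simp add: c_Nil)
lemma h0: "h132 {} x = 1" unfolding h132_def by (rule cnt_empty) (simp add: c_Nil)

lemma pk_max: "finite U \<Longrightarrow> {u\<in>U. x < u} \<noteq> {} \<Longrightarrow> Max U \<in> {u\<in>U. x < u}"
proof -
  assume f: "finite U" and "{u\<in>U. x < u} \<noteq> {}"
  then obtain u where u: "u \<in> U" "x < u" by blast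
  hence "U \<noteq> {}" "u \<le> Max U" using f by auto
  thus ?thesis using Max_in[OF f] u by auto
qed

lemma pk_min: "finite U \<Longrightarrow> {u\<in>U. x < u} \<noteq> {} \<Longrightarrow> Min {u\<in>U. x < u} \<in> {u\<in>U. x < u}"
  by (rule Min_in) auto

lemma g_char: "finite U \<Longrightarrow> g123 U x = G (card {u\<in>U. u \<le> x}) (card {u\<in>U. x < u})"
  by (rule G_char[where F=g123 and pk="\<lambda>U x. Max U", OF g0 g_rec pk_max])

lemma h_char: "finite U \<Longrightarrow> h132 U x = G (card {u\<in>U. u \<le> x}) (card {u\<in>U. x < u})"
  by (rule G_char[where F=h132 and pk="\<lambda>U x. Min {u\<in>U. x < u}", OF h0 h_rec pk_min])

lemma a123_eq_a132:
  assumes fU: "finite U"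
  shows "cnt U (\<lambda>r. \<not> c123 r) = cnt U (\<lambda>r. \<not> c132 r)"
proof -
  define x where "x = Max (insert 0 U)"
  have ux: "\<And>u. u \<in> U \<Longrightarrow> u \<le> x" unfolding x_def using fU by simp
  have "cnt U (\<lambda>r. \<not> c123 r) = g123 U x"
    unfolding g123_def using E123_none ux by (intro cnt_cong) auto
  also have "\<dots> = h132 U x" using g_char[OF fU] h_char[OF fU] by simp
  also have "\<dots> = cnt U (\<lambda>r. \<not> c132 r)"
    unfolding h132_def using E132_none ux by (intro cnt_cong) auto
  finally show ?thesis .
qed


definition good :: "(nat list \<Rightarrow> bool) \<Rightarrow> (nat list \<Rightarrow> bool) \<Rightarrow> nat list \<Rightarrow> bool" where
  "good P D xs \<longleftrightarrow> (\<forall>i. P (take i xs) \<or> D (drop i xs))"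

definition Dl :: "(nat list \<Rightarrow> bool) \<Rightarrow> nat set \<Rightarrow> nat list" where
  "Dl D S = (THE xs. distinct xs \<and> set xs = S \<and> D xs)"

definition GP where "GP P V = {p. distinct p \<and> set p \<subseteq> V \<and> P p}"

lemma finite_GP: "finite V \<Longrightarrow> finite (GP P V)"
proof -
  assume f: "finite V"
  have "GP P V \<subseteq> {r. set r \<subseteq> V \<and> length r \<le> card V}"
  proof (rule subsetI)
    fix p assume "p \<in> GP P V"
    hence p: "distinct p" "set p \<subseteq> V" unfolding GP_def by auto
    hence "length p \<le> card V" using card_mono[OF f p(2)] distinct_card[OF p(1)] by simp
    thus "p \<in> {r. set r \<subseteq> V \<and> length r \<le> card V}" using p by simp
  qed
  moreover have "finite {r. set r \<subseteq> V \<and> length r \<le> card V}"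
    using finite_lists_length_le[OF f] by simp
  ultimately show ?thesis by (rule finite_subset)
qed

lemma sum_GP:
  assumes f: "finite V"
  shows "(\<Sum>p\<in>GP P V. h (set p)) = (\<Sum>U\<in>Pow V. cnt U P * h U)"
proof -
  have "(\<Sum>p\<in>GP P V. h (set p)) = (\<Sum>U\<in>Pow V. \<Sum>p\<in>{p\<in>GP P V. set p = U}. h (set p))"
  proof -
    have "finite (Pow V)" using f by simp
    moreover have "set ` GP P V \<subseteq> Pow V" unfolding GP_def by auto
    ultimately show ?thesis by (rule sum.group[OF finite_GP[OF f], symmetric])
  qed
  also have "\<dots> = (\<Sum>U\<in>Pow V. cnt U P * h U)"
  proof (intro sum.cong refl)
    fix U assume "U \<in> Pow V"
    hence "{p\<in>GP P V. set p = U} = {r. distinct r \<and> set r = U \<and> P r}" unfolding GP_def by auto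
    thus "(\<Sum>p\<in>{p\<in>GP P V. set p = U}. h (set p)) = cnt U P * h U"
      unfolding cnt_def by simp
  qed
  finally show ?thesis .
qed

locale frame =
  fixes P D :: "nat list \<Rightarrow> bool"
  assumes Pnil: "P []"
    and Ppre: "\<And>xs i. P xs \<Longrightarrow> P (take i xs)"
    and Dsuf: "\<And>xs i. D xs \<Longrightarrow> D (drop i xs)"
    and Duniq: "\<And>S. finite S \<Longrightarrow> \<exists>!xs. distinct xs \<and> set xs = S \<and> D xs"
begin

lemma Dl: "finite S \<Longrightarrow> distinct (Dl D S) \<and> set (Dl D S) = S \<and> D (Dl D S)"
  unfolding Dl_def by (rule theI'[OF Duniq])

lemma Dl_unique:
  assumes f: "finite S" and h: "distinct xs" "set xs = S" "D xs"
  shows "xs = Dl D S"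
proof -
  have "(THE xs. distinct xs \<and> set xs = S \<and> D xs) = xs"
    by (rule the1_equality[OF Duniq[OF f]]) (use h in simp)
  thus ?thesis unfolding Dl_def by simp
qed

definition S1 where "S1 V = {zs. distinct zs \<and> set zs \<subseteq> V \<and> zs \<noteq> [] \<and> P (butlast zs)}"
definition S2 where "S2 V = {zs. distinct zs \<and> set zs \<subseteq> V \<and> zs \<noteq> [] \<and> P zs}"

lemma S2_sub: "S2 V \<subseteq> S1 V"
proof (rule subsetI)
  fix zs assume "zs \<in> S2 V"
  thus "zs \<in> S1 V" unfolding S1_def S2_def using Ppre[of zs "length zs - 1"] by (simp add: butlast_conv_take)
qed

lemma S2_eq: "S2 V = GP P V - {[]}" unfolding S2_def GP_def by auto

lemma card_S2: "finite V \<Longrightarrow> card (S2 V) = (\<Sum>U\<in>Pow V. cnt U P) - 1"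
proof -
  assume f: "finite V"
  have "[] \<in> GP P V" unfolding GP_def using Pnil by simp
  hence "card (S2 V) = card (GP P V) - 1" unfolding S2_eq using finite_GP[OF f] by simp
  also have "card (GP P V) = (\<Sum>p\<in>GP P V. (\<lambda>U. 1) (set p))" by simp
  also have "\<dots> = (\<Sum>U\<in>Pow V. cnt U P)" using sum_GP[OF f, where h="\<lambda>U. 1"] by simp
  finally show ?thesis .
qed

lemma card_S1: "finite V \<Longrightarrow> card (S1 V) = (\<Sum>U\<in>Pow V. cnt U P * (card V - card U))"
proof -
  assume f: "finite V"
  have eq: "S1 V = (\<lambda>(p, y). p @ [y]) ` (SIGMA p:GP P V. V - set p)"
  proof
    show "S1 V \<subseteq> (\<lambda>(p, y). p @ [y]) ` (SIGMA p:GP P V. V - set p)"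
    proof
      fix zs assume "zs \<in> S1 V"
      hence z: "distinct zs" "set zs \<subseteq> V" "zs \<noteq> []" "P (butlast zs)" unfolding S1_def by auto
      have zz: "zs = butlast zs @ [last zs]" using z(3) by simp
      have "butlast zs \<in> GP P V" using z unfolding GP_def by (auto simp: distinct_butlast dest: in_set_butlastD)
      moreover have "last zs \<in> V - set (butlast zs)"
      proof -
        have "distinct (butlast zs @ [last zs])" using z(1) by (simp add: zz[symmetric])
        hence "last zs \<notin> set (butlast zs)" by simp
        moreover have "last zs \<in> V" using z(2,3) last_in_set by blast
        ultimately show ?thesis by blast
      qed
      ultimately show "zs \<in> (\<lambda>(p, y). p @ [y]) ` (SIGMA p:GP P V. V - set p)" using zz by force
    qed
  next
    show "(\<lambda>(p, y). p @ [y]) ` (SIGMA p:GP P V. V - set p) \<subseteq> S1 V"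
      unfolding S1_def GP_def by auto
  qed
  have inj: "inj_on (\<lambda>(p, y). p @ [y]) (SIGMA p:GP P V. V - set p)"
    by (auto simp: inj_on_def)
  have "card (S1 V) = card (SIGMA p:GP P V. V - set p)" unfolding eq using inj by (rule card_image)
  also have "\<dots> = (\<Sum>p\<in>GP P V. card (V - set p))"
    using finite_GP[OF f] f by (intro card_SigmaI) auto
  also have "\<dots> = (\<Sum>p\<in>GP P V. card V - card (set p))"
    using f by (intro sum.cong refl) (auto simp: GP_def card_Diff_subset)
  also have "\<dots> = (\<Sum>U\<in>Pow V. cnt U P * (card V - card U))"
    using sum_GP[OF f, where h="\<lambda>U. card V - card U"] by simp
  finally show ?thesis .
qed

definition B where "B V = {xs. distinct xs \<and> set xs = V \<and> good P D xs \<and> \<not> P xs}"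

lemma card_B:
  assumes f: "finite V"
  shows "card (B V) = card (S1 V - S2 V)"
proof -
  define psi where "psi zs = zs @ Dl D (V - set zs)" for zs
  have into: "psi zs \<in> B V" if zs: "zs \<in> S1 V - S2 V" for zs
  proof -
    have z: "distinct zs" "set zs \<subseteq> V" "zs \<noteq> []" "P (butlast zs)" "\<not> P zs"
      using zs unfolding S1_def S2_def by auto
    have d: "distinct (Dl D (V - set zs))" "set (Dl D (V - set zs)) = V - set zs" "D (Dl D (V - set zs))"
      using Dl[of "V - set zs"] f by auto
    have "distinct (psi zs)" unfolding psi_def using z d by auto
    moreover have "set (psi zs) = V" unfolding psi_def using z d by auto
    moreover have "\<not> P (psi zs)"
    proof
      assume "P (psi zs)"
      hence "P (take (length zs) (psi zs))" by (rule Ppre)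
      thus False unfolding psi_def using z by simp
    qed
    moreover have "good P D (psi zs)" unfolding good_def
    proof
      fix i show "P (take i (psi zs)) \<or> D (drop i (psi zs))"
      proof (cases "i < length zs")
        case True
        hence "take i (psi zs) = take i zs" unfolding psi_def by simp
        also have "\<dots> = take i (butlast zs)" 
        proof -
          have "i \<le> length zs - 1" using True by linarith
          thus ?thesis by (simp add: butlast_conv_take min_def)
        qed
        finally have "take i (psi zs) = take i (butlast zs)" .
        thus ?thesis using Ppre z(4) by simp
      next
        case False
        hence "drop i (psi zs) = drop (i - length zs) (Dl D (V - set zs))" unfolding psi_def by simp
        thus ?thesis using Dsuf d(3) by simp
      qed
    qed
    ultimately show ?thesis unfolding B_def by simp
  qed
  have inj: "inj_on psi (S1 V - S2 V)"
  proof (rule inj_onI)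
    have aux: "False" if a: "zs1 \<in> S1 V - S2 V" "zs2 \<in> S1 V - S2 V" "psi zs1 = psi zs2"
      "length zs1 < length zs2" for zs1 zs2
    proof -
      have z2: "P (butlast zs2)" "zs2 \<noteq> []" using a(2) unfolding S1_def by auto
      have "zs2 = take (length zs2) (psi zs1)" using a(3) unfolding psi_def by simp
      hence "take (length zs2 - 1) zs2 = take (length zs2 - 1) (take (length zs2) (psi zs1))" by simp
      hence "butlast zs2 = take (length zs2 - 1) (psi zs1)" by (simp add: butlast_conv_take min_def)
      hence "take (length zs1) (butlast zs2) = zs1" using a(4) unfolding psi_def by (simp add: min_def)
      hence "P zs1" using Ppre[OF z2(1)] by metis
      thus False using a(1) unfolding S2_def S1_def by auto
    qed
    fix zs1 zs2 assume a: "zs1 \<in> S1 V - S2 V" "zs2 \<in> S1 V - S2 V" "psi zs1 = psi zs2"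
    have "length zs1 = length zs2"
      using aux[OF a] aux[OF a(2) a(1) a(3)[symmetric]] by (metis nat_neq_iff)
    thus "zs1 = zs2" using a(3) unfolding psi_def by (metis append_eq_append_conv)
  qed
  have onto: "B V \<subseteq> psi ` (S1 V - S2 V)"
  proof
    fix xs assume "xs \<in> B V"
    hence x: "distinct xs" "set xs = V" "good P D xs" "\<not> P xs" unfolding B_def by auto
    define m where "m = (LEAST i. \<not> P (take i xs))"
    have ex: "\<not> P (take (length xs) xs)" using x by simp
    have m1: "\<not> P (take m xs)" unfolding m_def using ex by (rule LeastI)
    have m2: "m \<le> length xs" unfolding m_def using ex by (rule Least_le)
    have m3: "\<And>i. i < m \<Longrightarrow> P (take i xs)" unfolding m_def using not_less_Least by blast
    have m0: "m \<noteq> 0" using m1 Pnil by (metis take0)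
    define zs where "zs = take m xs"
    have "zs \<in> S1 V - S2 V"
    proof -
      have "zs \<noteq> []" unfolding zs_def using m0 m2 x by auto
      moreover have "butlast zs = take (m - 1) xs" unfolding zs_def using m2 by (simp add: butlast_take)
      moreover have "P (take (m - 1) xs)" using m3 m0 by simp
      moreover have "distinct zs" "set zs \<subseteq> V" unfolding zs_def using x by (auto dest: in_set_takeD)
      ultimately show ?thesis using m1 unfolding S1_def S2_def zs_def by auto
    qed
    moreover have "xs = psi zs"
    proof -
      have "D (drop m xs)" using x(3) m1 unfolding good_def by blast
      moreover have "distinct (drop m xs)" using x by simp
      moreover have "set (drop m xs) = V - set zs"
      proof -
        have "distinct (take m xs @ drop m xs)" using x(1) by simp
        hence "set (take m xs) \<inter> set (drop m xs) = {}" by (simp only: distinct_append)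
        moreover have "set (take m xs) \<union> set (drop m xs) = V" using x(2) by (metis append_take_drop_id set_append)
        ultimately show ?thesis unfolding zs_def by blast
      qed
      ultimately have "drop m xs = Dl D (V - set zs)" using f by (intro Dl_unique) auto
      thus ?thesis unfolding psi_def zs_def by (metis append_take_drop_id)
    qed
    ultimately show "xs \<in> psi ` (S1 V - S2 V)" by blast
  qed
  have "B V = psi ` (S1 V - S2 V)" using onto into by blast
  thus ?thesis using card_image[OF inj] by simp
qed

lemma count_formula:
  assumes f: "finite V"
  shows "card {xs. distinct xs \<and> set xs = V \<and> good P D xs} =
     cnt V P + ((\<Sum>U\<in>Pow V. cnt U P * (card V - card U)) - ((\<Sum>U\<in>Pow V. cnt U P) - 1))"
proof -
  have fin: "finite {xs. distinct xs \<and> set xs = V \<and> good P D xs}" using finite_arr[OF f] by simp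
  have Pg: "\<And>xs. P xs \<Longrightarrow> good P D xs" unfolding good_def using Ppre by blast
  have split: "{xs. distinct xs \<and> set xs = V \<and> good P D xs} =
      {xs. distinct xs \<and> set xs = V \<and> P xs} \<union> B V"
    unfolding B_def using Pg by blast
  have fB: "finite (B V)" unfolding B_def using finite_arr[OF f] by simp
  have "card {xs. distinct xs \<and> set xs = V \<and> good P D xs} = card ({xs. distinct xs \<and> set xs = V \<and> P xs} \<union> B V)"
    unfolding split ..
  also have "\<dots> = cnt V P + card (B V)" unfolding cnt_def
    by (rule card_Un_disjoint[OF finite_arr[OF f] fB]) (auto simp: B_def)
  finally have c1: "card {xs. distinct xs \<and> set xs = V \<and> good P D xs} = cnt V P + card (B V)" .
  have fS2: "finite (S2 V)" unfolding S2_eq using finite_GP[OF f] by simp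
  have cB: "card (B V) = card (S1 V) - card (S2 V)"
    unfolding card_B[OF f] using S2_sub fS2 by (rule card_Diff_subset[rotated])
  show ?thesis using c1 cB card_S1[OF f] card_S2[OF f] by simp
qed

end

lemma frame_equiv:
  assumes "frame P D" "frame Q D'" "finite V" "\<And>U. U \<subseteq> V \<Longrightarrow> cnt U P = cnt U Q"
  shows "card {xs. distinct xs \<and> set xs = V \<and> good P D xs} = card {xs. distinct xs \<and> set xs = V \<and> good Q D' xs}"
proof -
  have "(\<Sum>U\<in>Pow V. cnt U P * (card V - card U)) = (\<Sum>U\<in>Pow V. cnt U Q * (card V - card U))"
    "(\<Sum>U\<in>Pow V. cnt U P) = (\<Sum>U\<in>Pow V. cnt U Q)" using assms(4) by (auto intro: sum.cong)
  thus ?thesis using frame.count_formula[OF assms(1,3)] frame.count_formula[OF assms(2,3)] assms(4)[of V] by simp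
qed


lemma cp_drop:
  assumes "contains_pop k rel (drop i xs)"
  shows "contains_pop k rel xs"
proof -
  obtain idx where a: "\<forall>j\<in>{1..k}. idx j < length (drop i xs)"
    and b: "\<forall>j\<in>{1..k}. \<forall>m\<in>{1..k}. j < m \<longrightarrow> idx j < idx m"
    and c: "\<forall>j\<in>{1..k}. \<forall>m\<in>{1..k}. rel j m \<longrightarrow> drop i xs ! idx j < drop i xs ! idx m"
    using assms unfolding contains_pop_def by blast
  show ?thesis unfolding contains_pop_def
  proof (intro exI[of _ "\<lambda>j. i + idx j"] conjI ballI impI)
    fix j assume "j \<in> {1..k}" hence "idx j < length (drop i xs)" using a by blast
    thus "i + idx j < length xs" by simp
  next
    fix j m assume "j \<in> {1..k}" "m \<in> {1..k}" "j < m" thus "i + idx j < i + idx m" using b by auto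
  next
    fix j m assume j: "j \<in> {1..k}" and m: "m \<in> {1..k}" and r: "rel j m"
    have "drop i xs ! idx j < drop i xs ! idx m" using c j m r by blast
    moreover have "i \<le> length xs" using a j by auto
    ultimately show "xs ! (i + idx j) < xs ! (i + idx m)" by simp
  qed
qed

lemma cp2_iff:
  "contains_pop 2 rel ys \<longleftrightarrow> (\<exists>i k. i < k \<and> k < length ys \<and>
     (rel 1 2 \<longrightarrow> ys!i < ys!k) \<and> (rel 2 1 \<longrightarrow> ys!k < ys!i) \<and> \<not> rel 1 1 \<and> \<not> rel 2 2)"
proof
  assume "contains_pop 2 rel ys"
  then obtain idx where a: "\<forall>j\<in>{1..2}. idx j < length ys"
    and b: "\<forall>j\<in>{1..2}. \<forall>m\<in>{1..2}. j < m \<longrightarrow> idx j < idx m"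
    and c: "\<forall>j\<in>{1..2}. \<forall>m\<in>{1..2}. rel j m \<longrightarrow> ys ! idx j < ys ! idx m"
    unfolding contains_pop_def by blast
  have "idx 1 < idx 2" "idx 2 < length ys" using a b by auto
  moreover have i1: "(1::nat) \<in> {1..2}" and i2: "(2::nat) \<in> {1..2}" by auto
  moreover have "rel 1 2 \<longrightarrow> ys ! idx 1 < ys ! idx 2" "rel 2 1 \<longrightarrow> ys ! idx 2 < ys ! idx 1"
    "\<not> rel 1 1" "\<not> rel 2 2"
    using c[rule_format, OF i1 i2] c[rule_format, OF i2 i1] c[rule_format, OF i1 i1] c[rule_format, OF i2 i2]
    by auto
  ultimately show "\<exists>i k. i < k \<and> k < length ys \<and>
     (rel 1 2 \<longrightarrow> ys!i < ys!k) \<and> (rel 2 1 \<longrightarrow> ys!k < ys!i) \<and> \<not> rel 1 1 \<and> \<not> rel 2 2" by blast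
next
  assume "\<exists>i k. i < k \<and> k < length ys \<and>
     (rel 1 2 \<longrightarrow> ys!i < ys!k) \<and> (rel 2 1 \<longrightarrow> ys!k < ys!i) \<and> \<not> rel 1 1 \<and> \<not> rel 2 2"
  then obtain i k where h: "i < k" "k < length ys" "rel 1 2 \<longrightarrow> ys!i < ys!k" "rel 2 1 \<longrightarrow> ys!k < ys!i"
    "\<not> rel 1 1" "\<not> rel 2 2" by blast
  show "contains_pop 2 rel ys" unfolding contains_pop_def
  proof (intro exI[of _ "\<lambda>t. if t = 1 then i else k"] conjI ballI impI)
    fix j :: nat assume "j \<in> {1..2}" thus "(if j = 1 then i else k) < length ys" using h by auto
  next
    fix j m :: nat assume "j \<in> {1..2}" "m \<in> {1..2}" "j < m"
    hence "j = 1" "m = 2" by auto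
    thus "(if j = 1 then i else k) < (if m = 1 then i else k)" using h by simp
  next
    fix j m :: nat assume j: "j \<in> {1..2}" and m: "m \<in> {1..2}" and r: "rel j m"
    have "j = 1 \<or> j = 2" "m = 1 \<or> m = 2" using j m by auto
    thus "ys ! (if j = 1 then i else k) < ys ! (if m = 1 then i else k)" using h r by auto
  qed
qed

definition Dasc :: "nat list \<Rightarrow> bool" where
  "Dasc ys \<longleftrightarrow> \<not> (\<exists>i k. i < k \<and> k < length ys \<and> ys!i < ys!k)"
definition Ddesc :: "nat list \<Rightarrow> bool" where
  "Ddesc ys \<longleftrightarrow> \<not> (\<exists>i k. i < k \<and> k < length ys \<and> ys!k < ys!i)"

lemma Dasc_sorted: "distinct ys \<Longrightarrow> Dasc ys \<longleftrightarrow> sorted_wrt (>) ys"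
  unfolding Dasc_def sorted_wrt_iff_nth_less
  by (metis less_irrefl nat_neq_iff nth_eq_iff_index_eq order.strict_trans)

lemma Ddesc_sorted: "distinct ys \<Longrightarrow> Ddesc ys \<longleftrightarrow> sorted_wrt (<) ys"
  unfolding Ddesc_def sorted_wrt_iff_nth_less
  by (metis less_irrefl nat_neq_iff nth_eq_iff_index_eq order.strict_trans)

lemma Dasc_drop: "Dasc ys \<Longrightarrow> Dasc (drop i ys)"
  unfolding Dasc_def
proof (elim contrapos_nn)
  assume "\<exists>j k. j < k \<and> k < length (drop i ys) \<and> drop i ys ! j < drop i ys ! k"
  then obtain j k where "j < k" "k < length (drop i ys)" "drop i ys ! j < drop i ys ! k" by blast
  thus "\<exists>j k. j < k \<and> k < length ys \<and> ys ! j < ys ! k"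
    by (intro exI[of _ "i+j"] exI[of _ "i+k"]) auto
qed

lemma Ddesc_drop: "Ddesc ys \<Longrightarrow> Ddesc (drop i ys)"
  unfolding Ddesc_def
proof (elim contrapos_nn)
  assume "\<exists>j k. j < k \<and> k < length (drop i ys) \<and> drop i ys ! k < drop i ys ! j"
  then obtain j k where "j < k" "k < length (drop i ys)" "drop i ys ! k < drop i ys ! j" by blast
  thus "\<exists>j k. j < k \<and> k < length ys \<and> ys ! k < ys ! j"
    by (intro exI[of _ "i+j"] exI[of _ "i+k"]) auto
qed

lemma uniq_desc: "finite S \<Longrightarrow> \<exists>!xs. distinct xs \<and> set xs = S \<and> Ddesc xs"
proof -
  assume f: "finite S"
  have "\<exists>!xs. sorted_wrt (<) xs \<and> set xs = S" using ex1_sorted_list_for_set_if_finite[OF f] .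
  moreover have "\<And>xs. (distinct xs \<and> set xs = S \<and> Ddesc xs) = (sorted_wrt (<) xs \<and> set xs = S)"
    using Ddesc_sorted strict_sorted_iff by blast
  ultimately show ?thesis by simp
qed

lemma uniq_asc: "finite S \<Longrightarrow> \<exists>!xs. distinct xs \<and> set xs = S \<and> Dasc xs"
proof -
  assume f: "finite S"
  obtain ys where ys: "distinct ys \<and> set ys = S \<and> Ddesc ys"
    and u: "\<And>zs. distinct zs \<and> set zs = S \<and> Ddesc zs \<Longrightarrow> zs = ys" using uniq_desc[OF f] by blast
  show ?thesis
  proof (rule ex1I[of _ "rev ys"])
    have "sorted_wrt (<) ys" using ys Ddesc_sorted by blast
    hence "sorted_wrt (>) (rev ys)" by (simp add: sorted_wrt_rev)
    thus "distinct (rev ys) \<and> set (rev ys) = S \<and> Dasc (rev ys)" using ys Dasc_sorted[of "rev ys"] by simp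
  next
    fix xs assume xs: "distinct xs \<and> set xs = S \<and> Dasc xs"
    hence "sorted_wrt (>) xs" using Dasc_sorted by blast
    hence "sorted_wrt (<) (rev xs)" by (simp add: sorted_wrt_rev)
    hence "Ddesc (rev xs)" using xs Ddesc_sorted[of "rev xs"] by simp
    hence "rev xs = ys" using u xs by simp
    thus "xs = rev ys" by auto
  qed
qed

lemma cp_nil: "\<not> contains_pop 3 rel []"
  unfolding contains_pop_def by auto

lemma frame_asc: "frame (\<lambda>xs. \<not> contains_pop 3 rel xs) Dasc"
  by unfold_locales (auto simp: cp_nil uniq_asc Dasc_drop dest: cp_take)

lemma frame_desc: "frame (\<lambda>xs. \<not> contains_pop 3 rel xs) Ddesc"
  by unfold_locales (auto simp: cp_nil uniq_desc Ddesc_drop dest: cp_take)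


lemma cp_split:
  assumes hR: "\<And>j m. j \<in> {1..5} \<Longrightarrow> m \<in> {1..5} \<Longrightarrow> R j m \<Longrightarrow> (j \<le> 3 \<longleftrightarrow> m \<le> 3)"
  shows "contains_pop 5 R xs \<longleftrightarrow>
    (\<exists>i. contains_pop 3 R (take i xs) \<and> contains_pop 2 (\<lambda>j m. R (j+3) (m+3)) (drop i xs))"
proof
  assume "contains_pop 5 R xs"
  then obtain idx where a: "\<forall>j\<in>{1..5}. idx j < length xs"
    and b: "\<forall>j\<in>{1..5}. \<forall>m\<in>{1..5}. j < m \<longrightarrow> idx j < idx m"
    and c: "\<forall>j\<in>{1..5}. \<forall>m\<in>{1..5}. R j m \<longrightarrow> xs ! idx j < xs ! idx m"
    unfolding contains_pop_def by blast
  define i where "i = Suc (idx 3)"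
  have le3: "\<And>j. j \<in> {1..3} \<Longrightarrow> idx j < i"
  proof -
    fix j :: nat assume j: "j \<in> {1..3}"
    show "idx j < i"
    proof (cases "j = 3")
      case True thus ?thesis unfolding i_def by simp
    next
      case False
      hence "j < 3" "j \<in> {1..5}" "(3::nat) \<in> {1..5}" using j by auto
      thus ?thesis using b unfolding i_def by (meson less_SucI)
    qed
  qed
  have gt3: "\<And>t. t \<in> {1..2} \<Longrightarrow> i \<le> idx (t+3)"
  proof -
    fix t :: nat assume "t \<in> {1..2}"
    hence "t + 3 \<in> {1..5}" "(3::nat) \<in> {1..5}" "3 < t + 3" by auto
    hence "idx 3 < idx (t+3)" using b by blast
    thus "i \<le> idx (t+3)" unfolding i_def by simp
  qed
  have in5: "\<And>j::nat. j \<in> {1..3} \<Longrightarrow> j \<in> {1..5}" by auto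
  have in5': "\<And>t::nat. t \<in> {1..2} \<Longrightarrow> t + 3 \<in> {1..5}" by auto
  have P1: "contains_pop 3 R (take i xs)" unfolding contains_pop_def
  proof (intro exI[of _ idx] conjI ballI impI)
    fix j :: nat assume "j \<in> {1..3}" thus "idx j < length (take i xs)" using le3 a in5 by auto
  next
    fix j m :: nat assume "j \<in> {1..3}" "m \<in> {1..3}" "j < m" thus "idx j < idx m" using b in5 by blast
  next
    fix j m :: nat assume j: "j \<in> {1..3}" and m: "m \<in> {1..3}" and r: "R j m"
    have "xs ! idx j < xs ! idx m" using c in5[OF j] in5[OF m] r by blast
    thus "take i xs ! idx j < take i xs ! idx m" using le3[OF j] le3[OF m] by simp
  qed
  have P2: "contains_pop 2 (\<lambda>j m. R (j+3) (m+3)) (drop i xs)" unfolding contains_pop_def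
  proof (intro exI[of _ "\<lambda>t. idx (t+3) - i"] conjI ballI impI)
    fix t :: nat assume t: "t \<in> {1..2}"
    have "idx (t+3) < length xs" using a in5'[OF t] by blast
    thus "idx (t+3) - i < length (drop i xs)" using gt3[OF t] by simp
  next
    fix t s :: nat assume t: "t \<in> {1..2}" and s: "s \<in> {1..2}" and ts: "t < s"
    hence "idx (t+3) < idx (s+3)" using b in5'[OF t] in5'[OF s] by auto
    thus "idx (t+3) - i < idx (s+3) - i" using gt3[OF t] gt3[OF s] by simp
  next
    fix t s :: nat assume t: "t \<in> {1..2}" and s: "s \<in> {1..2}" and r: "R (t+3) (s+3)"
    have "xs ! idx (t+3) < xs ! idx (s+3)" using c in5'[OF t] in5'[OF s] r by blast
    moreover have "idx (t+3) < length xs" using a in5'[OF t] by blast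
    hence "i \<le> length xs" using gt3[OF t] by simp
    ultimately show "drop i xs ! (idx (t+3) - i) < drop i xs ! (idx (s+3) - i)"
      using gt3[OF t] gt3[OF s] by simp
  qed
  show "\<exists>i. contains_pop 3 R (take i xs) \<and> contains_pop 2 (\<lambda>j m. R (j+3) (m+3)) (drop i xs)"
    using P1 P2 by blast
next
  assume "\<exists>i. contains_pop 3 R (take i xs) \<and> contains_pop 2 (\<lambda>j m. R (j+3) (m+3)) (drop i xs)"
  then obtain i where h1: "contains_pop 3 R (take i xs)" and h2: "contains_pop 2 (\<lambda>j m. R (j+3) (m+3)) (drop i xs)"
    by blast
  obtain idx1 where a1: "\<forall>j\<in>{1..3}. idx1 j < length (take i xs)"
    and b1: "\<forall>j\<in>{1..3}. \<forall>m\<in>{1..3}. j < m \<longrightarrow> idx1 j < idx1 m"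
    and c1: "\<forall>j\<in>{1..3}. \<forall>m\<in>{1..3}. R j m \<longrightarrow> take i xs ! idx1 j < take i xs ! idx1 m"
    using h1 unfolding contains_pop_def by blast
  obtain idx2 where a2: "\<forall>j\<in>{1..2}. idx2 j < length (drop i xs)"
    and b2: "\<forall>j\<in>{1..2}. \<forall>m\<in>{1..2}. j < m \<longrightarrow> idx2 j < idx2 m"
    and c2: "\<forall>j\<in>{1..2}. \<forall>m\<in>{1..2}. R (j+3) (m+3) \<longrightarrow> drop i xs ! idx2 j < drop i xs ! idx2 m"
    using h2 unfolding contains_pop_def by blast
  have one: "(1::nat) \<in> {1..2}" by simp
  have il: "i < length xs" using a2 one by fastforce
  have t1: "\<And>j::nat. j \<in> {1..3} \<Longrightarrow> idx1 j < i \<and> idx1 j < length xs" using a1 by auto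
  have t2: "\<And>j::nat. j \<in> {1..5} \<Longrightarrow> \<not> j \<le> 3 \<Longrightarrow> j - 3 \<in> {1..2}" by auto
  define idx where "idx j = (if j \<le> 3 then idx1 j else i + idx2 (j - 3))" for j
  show "contains_pop 5 R xs" unfolding contains_pop_def
  proof (intro exI[of _ idx] conjI ballI impI)
    fix j :: nat assume j: "j \<in> {1..5}"
    show "idx j < length xs"
    proof (cases "j \<le> 3")
      case True hence "j \<in> {1..3}" using j by auto
      thus ?thesis unfolding idx_def using t1 True by auto
    next
      case False
      hence "idx2 (j-3) < length xs - i" using a2 t2[OF j] by auto
      thus ?thesis unfolding idx_def using False by simp
    qed
  next
    fix j m :: nat assume j: "j \<in> {1..5}" and m: "m \<in> {1..5}" and jm: "j < m"
    show "idx j < idx m"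
    proof (cases "m \<le> 3")
      case True
      hence "j \<in> {1..3}" "m \<in> {1..3}" using j m jm by auto
      thus ?thesis unfolding idx_def using b1 jm True by auto
    next
      case mF: False
      show ?thesis
      proof (cases "j \<le> 3")
        case True hence "j \<in> {1..3}" using j by auto
        thus ?thesis unfolding idx_def using t1 True mF by fastforce
      next
        case False
        have "j - 3 < m - 3" using jm False by simp
        thus ?thesis unfolding idx_def using b2 t2[OF j False] t2[OF m mF] False mF by auto
      qed
    qed
  next
    fix j m :: nat assume j: "j \<in> {1..5}" and m: "m \<in> {1..5}" and r: "R j m"
    show "xs ! idx j < xs ! idx m"
    proof (cases "j \<le> 3")
      case True
      hence mT: "m \<le> 3" using hR[OF j m r] by simp
      have jj: "j \<in> {1..3}" "m \<in> {1..3}" using j m True mT by auto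
      have "take i xs ! idx1 j < take i xs ! idx1 m" using c1 jj r by blast
      thus ?thesis unfolding idx_def using True mT t1[OF jj(1)] t1[OF jj(2)] by simp
    next
      case False
      hence mF: "\<not> m \<le> 3" using hR[OF j m r] by simp
      have r': "R ((j-3)+3) ((m-3)+3)" using r False mF by simp
      have "drop i xs ! idx2 (j-3) < drop i xs ! idx2 (m-3)" using c2 t2[OF j False] t2[OF m mF] r' by blast
      thus ?thesis unfolding idx_def using False mF il by simp
    qed
  qed
qed


definition Acnt :: "nat \<Rightarrow> nat \<Rightarrow> nat \<Rightarrow> nat set \<Rightarrow> nat" where
  "Acnt a b c U = cnt U (\<lambda>r. \<not> contains_pop 3 (chain3 a b c) r)"

lemma chain3_rev:
  assumes "a \<in> {1..3}" "b \<in> {1..3}" "c \<in> {1..3}"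
  shows "contains_pop 3 (chain3 a b c) (rev r) = contains_pop 3 (chain3 (4-a) (4-b) (4-c)) r"
  unfolding cp_rev
proof (rule cp_cong)
  have e: "\<And>x y::nat. x \<in> {1..3} \<Longrightarrow> y \<in> {1..3} \<Longrightarrow> (3 + 1 - x = y) = (x = 4 - y)" by auto
  fix j m :: nat assume j: "j \<in> {1..3}" and m: "m \<in> {1..3}"
  show "chain3 a b c (3 + 1 - j) (3 + 1 - m) = chain3 (4 - a) (4 - b) (4 - c) j m"
    unfolding chain3_def by (simp only: e[OF j assms(3)] e[OF m assms(2)] e[OF j assms(2)] e[OF m assms(1)])
qed

lemma A_rev:
  assumes "a \<in> {1..3}" "b \<in> {1..3}" "c \<in> {1..3}"
  shows "Acnt a b c U = Acnt (4-a) (4-b) (4-c) U"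
proof -
  let ?L = "{r. distinct r \<and> set r = U \<and> \<not> contains_pop 3 (chain3 a b c) r}"
  let ?R = "{r. distinct r \<and> set r = U \<and> \<not> contains_pop 3 (chain3 (4-a) (4-b) (4-c)) r}"
  have key: "\<And>r. contains_pop 3 (chain3 a b c) (rev r) = contains_pop 3 (chain3 (4-a) (4-b) (4-c)) r"
    using chain3_rev[OF assms] .
  have "?L = rev ` ?R"
  proof (rule set_eqI, rule iffI)
    fix r assume "r \<in> ?L"
    hence rr: "rev r \<in> ?R" using key[of "rev r"] by simp
    show "r \<in> rev ` ?R" by (rule image_eqI[where x="rev r", OF _ rr]) simp
  next
    fix r assume "r \<in> rev ` ?R"
    then obtain s where "s \<in> ?R" "r = rev s" by blast
    thus "r \<in> ?L" using key[of s] by simp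
  qed
  hence "card ?L = card (rev ` ?R)" by (rule arg_cong)
  also have "\<dots> = card ?R" by (rule card_image) (simp add: inj_on_def)
  finally show ?thesis unfolding Acnt_def cnt_def .
qed

lemma chain3_flip: "(\<lambda>j m. chain3 a b c m j) = chain3 c b a"
  unfolding chain3_def by (auto simp: fun_eq_iff)

lemma A_compl:
  assumes UN: "U \<subseteq> {..N}"
  shows "Acnt a b c ((\<lambda>x. N - x) ` U) = Acnt c b a U"
proof -
  let ?f = "\<lambda>x::nat. N - x"
  have ff: "\<And>x. x \<le> N \<Longrightarrow> ?f (?f x) = x" by simp
  have anti: "\<And>r. set r \<subseteq> {..N} \<Longrightarrow> \<forall>x\<in>set r. \<forall>y\<in>set r. x < y \<longrightarrow> ?f y < ?f x"
    by auto
  have injf: "inj_on ?f {..N}" by (auto simp: inj_on_def)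
  have cpm: "contains_pop 3 (chain3 a b c) (map ?f r) = contains_pop 3 (chain3 c b a) r"
    if rN: "set r \<subseteq> {..N}" for r
  proof -
    have "contains_pop 3 (chain3 a b c) (map ?f r) = contains_pop 3 (\<lambda>j m. chain3 a b c m j) r"
      by (rule cp_map_anti[OF anti[OF rN]])
    moreover have "(\<lambda>j m. chain3 a b c m j) = chain3 c b a" by (rule chain3_flip)
    ultimately show ?thesis by metis
  qed
  have mm: "map ?f (map ?f r) = r" if rN: "set r \<subseteq> {..N}" for r
    unfolding map_map by (rule map_idI) (use rN in auto)
  let ?L = "{r. distinct r \<and> set r = ?f ` U \<and> \<not> contains_pop 3 (chain3 a b c) r}"
  let ?R = "{r. distinct r \<and> set r = U \<and> \<not> contains_pop 3 (chain3 c b a) r}"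
  have fU: "?f ` ?f ` U = U"
  proof -
    have "?f ` ?f ` U = (\<lambda>x. N - (N - x)) ` U" by (rule image_image)
    also have "\<dots> = (\<lambda>x. x) ` U" by (rule image_cong) (use UN in auto)
    finally show ?thesis by simp
  qed
  have fUN: "?f ` U \<subseteq> {..N}" by auto
  have "?L = map ?f ` ?R"
  proof (rule set_eqI, rule iffI)
    fix r assume r: "r \<in> ?L"
    hence rN: "set r \<subseteq> {..N}" using fUN by auto
    have "map ?f r \<in> ?R"
    proof -
      have "distinct (map ?f r)" using r rN inj_on_subset[OF injf rN] by (simp add: distinct_map)
      moreover have "set (map ?f r) = U" using r fU by simp
      moreover have "set (map ?f r) \<subseteq> {..N}" using UN calculation by simp
      hence "\<not> contains_pop 3 (chain3 c b a) (map ?f r)" using cpm[of "map ?f r"] mm[OF rN] r by simp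
      ultimately show ?thesis by simp
    qed
    moreover have "r = map ?f (map ?f r)" using mm[OF rN] by simp
    ultimately show "r \<in> map ?f ` ?R" by blast
  next
    fix r assume "r \<in> map ?f ` ?R"
    then obtain s where s: "s \<in> ?R" "r = map ?f s" by blast
    hence sN: "set s \<subseteq> {..N}" using UN by auto
    have "distinct r" using s sN inj_on_subset[OF injf sN] by (simp add: distinct_map)
    moreover have "set r = ?f ` U" using s by simp
    moreover have "\<not> contains_pop 3 (chain3 a b c) r" using s cpm[OF sN] by simp
    ultimately show "r \<in> ?L" by simp
  qed
  moreover have "inj_on (map ?f) ?R"
  proof (rule inj_onI)
    fix r s assume "r \<in> ?R" "s \<in> ?R" "map ?f r = map ?f s"
    moreover have "set r \<subseteq> {..N}" "set s \<subseteq> {..N}" using calculation UN by auto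
    ultimately show "r = s" using mm by metis
  qed
  ultimately show ?thesis unfolding Acnt_def cnt_def by (simp add: card_image)
qed

lemma A_base: "finite U \<Longrightarrow> Acnt 3 2 1 U = Acnt 2 3 1 U"
  unfolding Acnt_def cp_123 cp_132 by (rule a123_eq_a132)

lemma A_123_132:
  assumes fU: "finite U"
  shows "Acnt 1 2 3 U = Acnt 1 3 2 U"
proof -
  define N where "N = Max (insert 0 U)"
  let ?f = "\<lambda>x::nat. N - x"
  have UN: "U \<subseteq> {..N}" unfolding N_def using fU by auto
  define V where "V = ?f ` U"
  have VN: "V \<subseteq> {..N}" unfolding V_def by auto
  have fV: "?f ` V = U"
  proof -
    have "?f ` V = (\<lambda>x. N - (N - x)) ` U" unfolding V_def by (rule image_image)
    also have "\<dots> = (\<lambda>x. x) ` U" by (rule image_cong) (use UN in auto)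
    finally show ?thesis by simp
  qed
  have finV: "finite V" unfolding V_def using fU by simp
  have "Acnt 1 2 3 (?f ` V) = Acnt 3 2 1 V" by (rule A_compl[OF VN])
  hence "Acnt 1 2 3 U = Acnt 3 2 1 V" unfolding fV .
  also have "\<dots> = Acnt 2 3 1 V" by (rule A_base[OF finV])
  also have "Acnt 2 3 1 V = Acnt 1 3 2 (?f ` V)" by (rule A_compl[OF VN, symmetric])
  also have "\<dots> = Acnt 1 3 2 U" unfolding fV ..
  finally show ?thesis .
qed

lemma perm3:
  assumes h: "{a, b, c} = {1::nat, 2, 3}"
  shows "(a = 1 \<and> b = 2 \<and> c = 3) \<or> (a = 1 \<and> b = 3 \<and> c = 2) \<or> (a = 2 \<and> b = 1 \<and> c = 3) \<or>
         (a = 2 \<and> b = 3 \<and> c = 1) \<or> (a = 3 \<and> b = 1 \<and> c = 2) \<or> (a = 3 \<and> b = 2 \<and> c = 1)"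
proof -
  have c3: "card {a, b, c} = 3" using h by simp
  have ab: "a \<noteq> b"
  proof
    assume "a = b" hence "card {a, b, c} \<le> 2" by (simp add: card_insert_if)
    thus False using c3 by simp
  qed
  have ac: "a \<noteq> c"
  proof
    assume "a = c" hence "card {a, b, c} \<le> 2" by (simp add: card_insert_if)
    thus False using c3 by simp
  qed
  have bc: "b \<noteq> c"
  proof
    assume "b = c" hence "card {a, b, c} \<le> 2" by (simp add: card_insert_if)
    thus False using c3 by simp
  qed
  have ma: "a = 1 \<or> a = 2 \<or> a = 3" using h by blast
  have mb: "b = 1 \<or> b = 2 \<or> b = 3" using h by blast
  have mc: "c = 1 \<or> c = 2 \<or> c = 3" using h by blast
  from ma mb mc ab ac bc show ?thesis by fastforce
qed

lemma A_all:
  assumes abc: "{a, b, c} = {1::nat, 2, 3}" and fU: "finite U"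
  shows "Acnt a b c U = Acnt 3 2 1 U"
proof -
  have r1: "Acnt 3 2 1 U = Acnt 1 2 3 U" using A_rev[of 3 2 1 U] by simp
  have r2: "Acnt 2 3 1 U = Acnt 2 1 3 U" using A_rev[of 2 3 1 U] by simp
  have r3: "Acnt 1 3 2 U = Acnt 3 1 2 U" using A_rev[of 1 3 2 U] by simp
  have b: "Acnt 3 2 1 U = Acnt 2 3 1 U" by (rule A_base[OF fU])
  have c: "Acnt 1 2 3 U = Acnt 1 3 2 U" by (rule A_123_132[OF fU])
  from perm3[OF abc] show ?thesis
  proof (elim disjE conjE)
    assume "a = 1" "b = 2" "c = 3" thus ?thesis using r1 by simp
  next
    assume "a = 1" "b = 3" "c = 2" thus ?thesis using r1 c by simp
  next
    assume "a = 2" "b = 1" "c = 3" thus ?thesis using r2 b by simp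
  next
    assume "a = 2" "b = 3" "c = 1" thus ?thesis using b by simp
  next
    assume "a = 3" "b = 1" "c = 2" thus ?thesis using r3 r1 c by simp
  next
    assume "a = 3" "b = 2" "c = 1" thus ?thesis by simp
  qed
qed


definition Kn :: "nat \<Rightarrow> nat" where
  "Kn n = card {xs. distinct xs \<and> set xs = {1..n} \<and> good (\<lambda>xs. \<not> contains_pop 3 (chain3 3 2 1) xs) Dasc xs}"

lemma avoid_good:
  assumes hR: "\<And>j m. j \<in> {1..5} \<Longrightarrow> m \<in> {1..5} \<Longrightarrow> R j m \<Longrightarrow> (j \<le> 3 \<longleftrightarrow> m \<le> 3)"
    and c3: "\<And>xs. contains_pop 3 R xs = contains_pop 3 Q xs"
    and c2: "\<And>ys. contains_pop 2 (\<lambda>j m. R (j+3) (m+3)) ys = (\<not> Dx ys)"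
  shows "avoiders 5 R n = {xs. distinct xs \<and> set xs = {1..n} \<and> good (\<lambda>xs. \<not> contains_pop 3 Q xs) Dx xs}"
proof -
  have "contains_pop 5 R xs = (\<not> good (\<lambda>xs. \<not> contains_pop 3 Q xs) Dx xs)" for xs
  proof -
    have "contains_pop 5 R xs \<longleftrightarrow>
      (\<exists>i. contains_pop 3 R (take i xs) \<and> contains_pop 2 (\<lambda>j m. R (j+3) (m+3)) (drop i xs))"
      by (rule cp_split[OF hR])
    also have "\<dots> \<longleftrightarrow> (\<exists>i. contains_pop 3 Q (take i xs) \<and> \<not> Dx (drop i xs))" using c3 c2 by simp
    also have "\<dots> \<longleftrightarrow> \<not> good (\<lambda>xs. \<not> contains_pop 3 Q xs) Dx xs" unfolding good_def by blast
    finally show ?thesis .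
  qed
  thus ?thesis unfolding avoiders_def perms_def by auto
qed

lemma case1:
  assumes abc: "{a, b, c} = {1::nat, 2, 3}" and de: "{d, e} = {4::nat, 5}"
  shows "card (avoiders 5 (pop5 a b c d e) n) = Kn n"
proof -
  have in3: "a \<in> {1..3}" "b \<in> {1..3}" "c \<in> {1..3}"
  proof -
    have "a \<in> {1,2,3}" "b \<in> {1,2,3}" "c \<in> {1,2,3}" using abc by blast+
    thus "a \<in> {1..3}" "b \<in> {1..3}" "c \<in> {1..3}" by auto
  qed
  have de': "(d = 4 \<and> e = 5) \<or> (d = 5 \<and> e = 4)"
  proof -
    have "d \<in> {4,5}" "e \<in> {4,5}" "4 \<in> {d,e}" "5 \<in> {d,e}" using de by blast+
    thus ?thesis by auto
  qed
  have hR: "\<And>j m. j \<in> {1..5} \<Longrightarrow> m \<in> {1..5} \<Longrightarrow> pop5 a b c d e j m \<Longrightarrow> (j \<le> 3 \<longleftrightarrow> m \<le> 3)"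
    unfolding pop5_def using in3 de' by auto
  have c3: "\<And>xs. contains_pop 3 (pop5 a b c d e) xs = contains_pop 3 (chain3 a b c) xs"
    by (rule cp_cong) (use in3 de' in \<open>auto simp: pop5_def chain3_def\<close>)
  have cnt: "\<And>U. U \<subseteq> {1..n} \<Longrightarrow> cnt U (\<lambda>xs. \<not> contains_pop 3 (chain3 a b c) xs) =
      cnt U (\<lambda>xs. \<not> contains_pop 3 (chain3 3 2 1) xs)"
  proof -
    fix U :: "nat set" assume "U \<subseteq> {1..n}"
    hence "finite U" using finite_subset by blast
    thus "cnt U (\<lambda>xs. \<not> contains_pop 3 (chain3 a b c) xs) = cnt U (\<lambda>xs. \<not> contains_pop 3 (chain3 3 2 1) xs)"
      using A_all[OF abc] unfolding Acnt_def by blast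
  qed
  from de' show ?thesis
  proof
    assume h: "d = 4 \<and> e = 5"
    have c2: "\<And>ys. contains_pop 2 (\<lambda>j m. pop5 a b c d e (j+3) (m+3)) ys = (\<not> Ddesc ys)"
      unfolding cp2_iff Ddesc_def using in3 h by (auto simp: pop5_def)
    have "avoiders 5 (pop5 a b c d e) n =
        {xs. distinct xs \<and> set xs = {1..n} \<and> good (\<lambda>xs. \<not> contains_pop 3 (chain3 a b c) xs) Ddesc xs}"
      by (rule avoid_good[OF hR c3 c2])
    thus ?thesis unfolding Kn_def using frame_equiv[OF frame_desc frame_asc _ cnt] by simp
  next
    assume h: "d = 5 \<and> e = 4"
    have c2: "\<And>ys. contains_pop 2 (\<lambda>j m. pop5 a b c d e (j+3) (m+3)) ys = (\<not> Dasc ys)"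
      unfolding cp2_iff Dasc_def using in3 h by (auto simp: pop5_def)
    have "avoiders 5 (pop5 a b c d e) n =
        {xs. distinct xs \<and> set xs = {1..n} \<and> good (\<lambda>xs. \<not> contains_pop 3 (chain3 a b c) xs) Dasc xs}"
      by (rule avoid_good[OF hR c3 c2])
    thus ?thesis unfolding Kn_def using frame_equiv[OF frame_asc frame_asc _ cnt] by simp
  qed
qed

lemma case2_rev:
  assumes ins: "a \<in> {1..5}" "b \<in> {1..5}" "c \<in> {1..5}" "d \<in> {1..5}" "e \<in> {1..5}"
  shows "card (avoiders 5 (pop5 a b c d e) n) = card (avoiders 5 (pop5 (6-a) (6-b) (6-c) (6-d) (6-e)) n)"
proof -
  let ?R = "pop5 a b c d e" and ?R' = "pop5 (6-a) (6-b) (6-c) (6-d) (6-e)"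
  have key: "contains_pop 5 ?R (rev xs) = contains_pop 5 ?R' xs" for xs
    unfolding cp_rev
  proof (rule cp_cong)
    have q: "\<And>x y::nat. x \<in> {1..5} \<Longrightarrow> y \<in> {1..5} \<Longrightarrow> (5 + 1 - x = y) = (x = 6 - y)" by auto
    fix j m :: nat assume j: "j \<in> {1..5}" and m: "m \<in> {1..5}"
    show "?R (5 + 1 - j) (5 + 1 - m) = ?R' j m"
      unfolding pop5_def
      by (simp only: q[OF j ins(1)] q[OF j ins(2)] q[OF j ins(3)] q[OF j ins(4)] q[OF j ins(5)]
          q[OF m ins(1)] q[OF m ins(2)] q[OF m ins(3)] q[OF m ins(4)] q[OF m ins(5)])
  qed
  have "avoiders 5 ?R n = rev ` avoiders 5 ?R' n"
  proof (rule set_eqI, rule iffI)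
    fix x assume "x \<in> avoiders 5 ?R n"
    hence rr: "rev x \<in> avoiders 5 ?R' n" using key[of "rev x"] unfolding avoiders_def perms_def by simp
    show "x \<in> rev ` avoiders 5 ?R' n" by (rule image_eqI[where x="rev x", OF _ rr]) simp
  next
    fix x assume "x \<in> rev ` avoiders 5 ?R' n"
    then obtain s where "s \<in> avoiders 5 ?R' n" "x = rev s" by blast
    thus "x \<in> avoiders 5 ?R n" using key[of s] unfolding avoiders_def perms_def by simp
  qed
  hence "card (avoiders 5 ?R n) = card (rev ` avoiders 5 ?R' n)" by (rule arg_cong)
  also have "\<dots> = card (avoiders 5 ?R' n)" by (rule card_image) (simp add: inj_on_def)
  finally show ?thesis .
qed

lemma all_K:
  assumes "admissible5 a b c d e"
  shows "card (avoiders 5 (pop5 a b c d e) n) = Kn n"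
  using assms unfolding admissible5_def
proof
  assume "{a, b, c} = {1, 2, 3} \<and> {d, e} = {4, 5}"
  thus ?thesis using case1 by blast
next
  assume h: "{a, b, c} = {3, 4, 5} \<and> {d, e} = {1, 2}"
  have m: "a \<in> {3,4,5}" "b \<in> {3,4,5}" "c \<in> {3,4,5}" "d \<in> {1,2}" "e \<in> {1,2}" using h by blast+
  hence ins: "a \<in> {1..5}" "b \<in> {1..5}" "c \<in> {1..5}" "d \<in> {1..5}" "e \<in> {1..5}" by auto
  have "{6-a, 6-b, 6-c} = (\<lambda>x. 6 - x) ` {a, b, c}" by simp
  also have "\<dots> = (\<lambda>x. 6 - x) ` {3, 4, 5::nat}" using h by simp
  also have "\<dots> = {1, 2, 3}" by auto
  finally have abc: "{6-a, 6-b, 6-c} = {1::nat, 2, 3}" .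
  have "{6-d, 6-e} = (\<lambda>x. 6 - x) ` {d, e}" by simp
  also have "\<dots> = (\<lambda>x. 6 - x) ` {1, 2::nat}" using h by simp
  also have "\<dots> = {4, 5}" by auto
  finally have de: "{6-d, 6-e} = {4::nat, 5}" .
  show ?thesis using case2_rev[OF ins] case1[OF abc de] by simp
qed

theorem mainTheorem12:
  assumes "admissible5 a b c d e"
    and "admissible5 a' b' c' d' e'"
  shows "wilf_equiv 5 (pop5 a b c d e) (pop5 a' b' c' d' e')"
  unfolding wilf_equiv_def using all_K[OF assms(1)] all_K[OF assms(2)] by simp


end
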